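(* Let $H_B=(V_B,E_B)$ be a 3-uniform hypergraph with $n=|V_B|$ vertices, let $\varepsilon=1/n^{100}$, and let $\{\mathbf v_a\}_{a\in V_B\cup\{\emptyset\}}$ be a feasible solution of the SDP below with respect to which every vertex of $H_B$ is $\varepsilon$-balanced. Then for every edge $\{a,b,c\}\in E_B$, $\|\bar{\mathbf u}_a+\bar{\mathbf u}_b+\bar{\mathbf u}_c\|^2\le 18\varepsilon$.
   Context: SDP: unit vectors $\mathbf v_a\in\mathbb R^d$ for $a\in V_B\cup\{\emptyset\}$ with $\mathbf v_a+\mathbf v_b+\mathbf v_c=-\mathbf v_\emptyset$ for every edge $\{a,b,c\}$. $\gamma_a=\langle\mathbf v_a,\mathbf v_\emptyset\rangle$; vertex $a$ is $\varepsilon$-balanced if $\gamma_a\in[-1/3-\varepsilon,-1/3+\varepsilon]$. For such $a$, $\bar{\mathbf u}_a=\frac{\mathbf v_a-\gamma_a\mathbf v_\emptyset}{\sqrt{1-\gamma_a^2}}$ (the unit vector along the component of $\mathbf v_a$ orthogonal to $\mathbf v_\emptyset$). *)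

theory Defs
  imports "HOL-Analysis.Analysis"
begin

definition three_uniform_hypergraph :: "'v set \<Rightarrow> 'v set set \<Rightarrow> bool" where
  "three_uniform_hypergraph V E \<longleftrightarrow> finite V \<and> (\<forall>e\<in>E. e \<subseteq> V \<and> card e = 3)"

text \<open>Feasible SDP solution: v gives the vectors of the vertices, v0 the vector of the
  special element (empty set). All unit vectors, and v_a+v_b+v_c = -v0 on every edge.\<close>
definition sdp_feasible :: "'v set \<Rightarrow> 'v set set \<Rightarrow> ('v \<Rightarrow> 'a::euclidean_space) \<Rightarrow> 'a \<Rightarrow> bool" where
  "sdp_feasible V E v v0 \<longleftrightarrow> norm v0 = 1 \<and> (\<forall>a\<in>V. norm (v a) = 1) \<and>
     (\<forall>a b c. {a, b, c} \<in> E \<longrightarrow> v a + v b + v c = - v0)"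

definition gamma :: "('v \<Rightarrow> 'a::euclidean_space) \<Rightarrow> 'a \<Rightarrow> 'v \<Rightarrow> real" where
  "gamma v v0 a = inner (v a) v0"

definition balanced :: "('v \<Rightarrow> 'a::euclidean_space) \<Rightarrow> 'a \<Rightarrow> real \<Rightarrow> 'v \<Rightarrow> bool" where
  "balanced v v0 \<epsilon> a \<longleftrightarrow> gamma v v0 a \<in> {-1/3 - \<epsilon> .. -1/3 + \<epsilon>}"

definition ubar :: "('v \<Rightarrow> 'a::euclidean_space) \<Rightarrow> 'a \<Rightarrow> 'v \<Rightarrow> 'a" where
  "ubar v v0 a = (1 / sqrt (1 - (gamma v v0 a)\<^sup>2)) *\<^sub>R (v a - gamma v v0 a *\<^sub>R v0)"

end

theory Submission
  imports Defs
begin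

lemma sqrt_close: fixes y :: real assumes "y \<ge> 0" shows "\<bar>sqrt y - 1\<bar> \<le> \<bar>y - 1\<bar>"
proof -
  have "(sqrt y - 1) * (sqrt y + 1) = y - 1" using assms by (simp add: algebra_simps power2_eq_square[symmetric])
  moreover have "sqrt y + 1 \<ge> 1" using assms by simp
  ultimately have "\<bar>y - 1\<bar> = \<bar>sqrt y - 1\<bar> * (sqrt y + 1)" using abs_mult[of "sqrt y - 1" "sqrt y + 1"] by simp
  also have "\<dots> \<ge> \<bar>sqrt y - 1\<bar>" using mult_left_mono[OF \<open>sqrt y + 1 \<ge> 1\<close>, of "\<bar>sqrt y - 1\<bar>"] by simp
  finally show ?thesis .
qed

lemma one_bound: fixes g e :: real
  assumes "\<bar>g + 1/3\<bar> \<le> e" "e \<le> 1/100"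
  shows "\<bar>1 - (3 / sqrt 8) * sqrt (1 - g^2)\<bar> \<le> e"
proof -
  define t where "t = g + 1/3"
  have g: "g = t - 1/3" using t_def by simp
  have te: "\<bar>t\<bar> \<le> e" using assms t_def by simp
  define y where "y = 9 * (1 - g^2) / 8"
  have y: "y - 1 = 3*t/4 - 9*t^2/8" unfolding y_def g by (simp add: field_simps power2_eq_square)
  have t2: "t^2 \<le> e * (1/100)" using te assms(2)
    by (metis abs_ge_zero mult_mono power2_abs power2_eq_square order_trans)
  have "\<bar>y - 1\<bar> \<le> 3*\<bar>t\<bar>/4 + 9*t^2/8" unfolding y using abs_triangle_ineq4[of "3*t/4" "9*t^2/8"] by (simp add: abs_mult)
  also have "\<dots> \<le> e" using te t2 by simp
  finally have ye: "\<bar>y - 1\<bar> \<le> e" .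
  have y0: "y \<ge> 0" using ye assms(2) by simp
  have "(3 / sqrt 8) * sqrt (1 - g^2) = sqrt y"
  proof -
    have "sqrt y = sqrt 9 * sqrt (1 - g^2) / sqrt 8" unfolding y_def real_sqrt_divide real_sqrt_mult by (rule refl)
    moreover have "sqrt 9 = (3::real)" by (simp add: real_sqrt_unique)
    ultimately show ?thesis by simp
  qed
  then show ?thesis using sqrt_close[OF y0] ye by (simp add: abs_minus_commute)
qed

theorem lemma4p1:
  fixes V :: "'v set" and E :: "'v set set"
    and v :: "'v \<Rightarrow> 'a::euclidean_space" and v0 :: 'a and \<epsilon> :: real
  assumes "three_uniform_hypergraph V E"
    and "\<epsilon> = 1 / (real (card V)) ^ 100"
    and "sdp_feasible V E v v0"
    and "\<forall>a\<in>V. balanced v v0 \<epsilon> a"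
    and "{a, b, c} \<in> E"
  shows "(norm (ubar v v0 a + ubar v v0 b + ubar v v0 c))\<^sup>2 \<le> 18 * \<epsilon>"
proof -
  have fin: "finite V" and sub: "{a,b,c} \<subseteq> V" and c3: "card {a,b,c} = 3"
    using assms(1,5) unfolding three_uniform_hypergraph_def by auto
  have "card V \<ge> 3" using card_mono[OF fin sub] c3 by simp
  hence cV: "real (card V) \<ge> 3" by simp
  have cpos: "card V > 0" using \<open>card V \<ge> 3\<close> by linarith
  have "(3::real) ^ 100 \<le> real (card V) ^ 100" using cV by (intro power_mono) auto
  hence "real (card V) ^ 100 \<ge> 100" by simp
  hence N: "real (card V) ^ 100 \<ge> 100" .
  have epos: "\<epsilon> > 0" using N assms(2) cpos by simp
  have esmall: "\<epsilon> \<le> 1/100" unfolding assms(2) using N cpos by (intro divide_left_mono) auto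
  have n0: "norm v0 = 1" and nv: "\<And>x. x \<in> V \<Longrightarrow> norm (v x) = 1"
    and sumv: "v a + v b + v c = - v0" using assms(3,5) unfolding sdp_feasible_def by auto
  define g where "g x = inner (v x) v0" for x
  define w where "w x = v x - g x *\<^sub>R v0" for x
  define r where "r x = sqrt (1 - (g x)^2)" for x
  define K where "K = 3 / sqrt (8::real)"
  have ub: "ubar v v0 x = (1 / r x) *\<^sub>R w x" for x
    unfolding ubar_def gamma_def g_def w_def r_def by simp
  have v00: "inner v0 v0 = 1" using n0 by (simp add: norm_eq_sqrt_inner)
  have key: "norm ((1 / r x - K) *\<^sub>R w x) \<le> \<epsilon>" if x: "x \<in> V" for x
  proof -
    have vv: "inner (v x) (v x) = 1" using nv[OF x] by (simp add: norm_eq_sqrt_inner)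
    have "\<bar>g x + 1/3\<bar> \<le> \<epsilon>" using assms(4) x unfolding balanced_def gamma_def g_def by auto
    hence gb: "\<bar>1 - K * r x\<bar> \<le> \<epsilon>" using one_bound esmall unfolding K_def r_def by blast
    have g1: "(g x)^2 < 1" using \<open>\<bar>g x + 1/3\<bar> \<le> \<epsilon>\<close> esmall
      unfolding abs_square_less_1 by (simp add: abs_le_iff abs_less_iff)
    have rpos: "r x > 0" unfolding r_def using g1 by simp
    have "(norm (w x))^2 = inner (w x) (w x)" by (simp add: power2_norm_eq_inner)
    also have "\<dots> = 1 - (g x)^2" unfolding w_def
      by (simp add: inner_diff_left inner_diff_right vv v00 inner_commute power2_eq_square g_def)
    finally have "norm (w x) = r x" unfolding r_def by (simp add: real_sqrt_unique)
    hence "norm ((1 / r x - K) *\<^sub>R w x) = \<bar>1 / r x - K\<bar> * r x" by simp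
    also have "\<dots> = \<bar>1 - K * r x\<bar>" using rpos
      by (simp add: abs_mult[symmetric] field_simps)
    finally show ?thesis using gb by simp
  qed
  have sg: "g a + g b + g c = -1" unfolding g_def using sumv v00
    by (metis inner_add_left inner_minus_left)
  have "w a + w b + w c = (v a + v b + v c) - (g a + g b + g c) *\<^sub>R v0"
    unfolding w_def by (simp add: algebra_simps)
  hence sw: "w a + w b + w c = 0" using sumv sg by simp
  have eq: "ubar v v0 a + ubar v v0 b + ubar v v0 c =
     (1 / r a - K) *\<^sub>R w a + (1 / r b - K) *\<^sub>R w b + (1 / r c - K) *\<^sub>R w c"
  proof -
    have "(1 / r a - K) *\<^sub>R w a + (1 / r b - K) *\<^sub>R w b + (1 / r c - K) *\<^sub>R w c
      = (1 / r a) *\<^sub>R w a + (1 / r b) *\<^sub>R w b + (1 / r c) *\<^sub>R w c - K *\<^sub>R (w a + w b + w c)"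
      by (simp add: algebra_simps)
    then show ?thesis using sw ub by simp
  qed
  have "norm (ubar v v0 a + ubar v v0 b + ubar v v0 c) \<le> 3 * \<epsilon>"
  proof -
    have ka: "norm ((1 / r a - K) *\<^sub>R w a) \<le> \<epsilon>" and kb: "norm ((1 / r b - K) *\<^sub>R w b) \<le> \<epsilon>"
      and kc: "norm ((1 / r c - K) *\<^sub>R w c) \<le> \<epsilon>" using key sub by auto
    show ?thesis unfolding eq
      using norm_triangle_ineq[of "(1 / r a - K) *\<^sub>R w a + (1 / r b - K) *\<^sub>R w b" "(1 / r c - K) *\<^sub>R w c"]
        norm_triangle_ineq[of "(1 / r a - K) *\<^sub>R w a" "(1 / r b - K) *\<^sub>R w b"] ka kb kc by linarith
  qed
  hence "(norm (ubar v v0 a + ubar v v0 b + ubar v v0 c))\<^sup>2 \<le> (3*\<epsilon>)^2"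
    by (intro power_mono) auto
  also have "\<dots> \<le> 18 * \<epsilon>" using epos esmall by (simp add: power2_eq_square)
  finally show ?thesis .
qed

end
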